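(* Let $G$ be a graph with at least one isolated vertex such that $G\ne\widetilde G$ (i.e., $G$ has a pair of distinct twins). Then for every $t\ge 1$, \[\mu_t(\widetilde G)\cong \widetilde{\mu_t(G)}+(t-1)K_1.\]
   Context: All graphs are finite and simple. For a graph $G$ with $V(G)=\{v_1,\dots,v_n\}$ and an integer $t\ge1$, the generalized Mycielskian $\mu_t(G)$ has vertex set $\{u_i^s: 1\le i\le n,\ 0\le s\le t\}\cup\{w\}$, where $u_i^0$ is identified with $v_i$. Its edges are: $u_i^0u_j^0$ for each edge $v_iv_j$ of $G$; $u_i^su_j^{s+1}$ and $u_j^su_i^{s+1}$ for each edge $v_iv_j$ of $G$ and each $0\le s<t$; and $u_i^tw$ for all $1\le i\le n$. Two vertices are twins if they have the same open neighborhood; being twins is an equivalence relation $\sim$ on $V(G)$. The twin quotient $\widetilde G$ has as vertices the equivalence classes $[x]$ of $\sim$, with $[x]$ adjacent to $[z]$ iff some $p\in[x]$ and $q\in[z]$ are adjacent in $G$. $+$ denotes disjoint union and $(t-1)K_1$ denotes $t-1$ isolated vertices. *)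

theory Defs
  imports Main
begin

type_synonym 'a graph = "'a set \<times> 'a set set"

definition simple_graph :: "'a graph \<Rightarrow> bool" where
  "simple_graph G \<longleftrightarrow> finite (fst G) \<and>
     (\<forall>e\<in>snd G. \<exists>u v. u \<noteq> v \<and> u \<in> fst G \<and> v \<in> fst G \<and> e = {u, v})"

definition verts :: "'a graph \<Rightarrow> 'a set" where "verts G = fst G"
definition edges :: "'a graph \<Rightarrow> 'a set set" where "edges G = snd G"

definition adj :: "'a graph \<Rightarrow> 'a \<Rightarrow> 'a \<Rightarrow> bool" where
  "adj G u v \<longleftrightarrow> {u, v} \<in> edges G"

definition nbhd :: "'a graph \<Rightarrow> 'a \<Rightarrow> 'a set" where
  "nbhd G x = {y \<in> verts G. adj G x y}"

definition isolated :: "'a graph \<Rightarrow> 'a \<Rightarrow> bool" where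
  "isolated G x \<longleftrightarrow> x \<in> verts G \<and> nbhd G x = {}"

definition twins :: "'a graph \<Rightarrow> 'a \<Rightarrow> 'a \<Rightarrow> bool" where
  "twins G x y \<longleftrightarrow> x \<in> verts G \<and> y \<in> verts G \<and> nbhd G x = nbhd G y"

definition twin_class :: "'a graph \<Rightarrow> 'a \<Rightarrow> 'a set" where
  "twin_class G x = {y. twins G x y}"

definition twin_quotient :: "'a graph \<Rightarrow> 'a set graph" where
  "twin_quotient G =
     (twin_class G ` verts G,
      {{X, Z} | X Z. X \<in> twin_class G ` verts G \<and> Z \<in> twin_class G ` verts G \<and>
                    (\<exists>p\<in>X. \<exists>q\<in>Z. adj G p q)})"

text \<open>Generalized Mycielskian: vertex \<open>u_i^s\<close> is \<open>Some (v_i, s)\<close>, the apex \<open>w\<close> is \<open>None\<close>;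
  \<open>u_i^0\<close> is identified with \<open>v_i\<close>.\<close>
definition mycielskian :: "nat \<Rightarrow> 'a graph \<Rightarrow> ('a \<times> nat) option graph" where
  "mycielskian t G =
     ({Some (v, s) | v s. v \<in> verts G \<and> s \<le> t} \<union> {None},
      {{Some (u, 0), Some (v, 0)} | u v. adj G u v}
      \<union> {{Some (u, s), Some (v, Suc s)} | u v s. adj G u v \<and> s < t}
      \<union> {{Some (v, t), None} | v. v \<in> verts G})"

definition add_isolated :: "'a graph \<Rightarrow> nat \<Rightarrow> ('a + nat) graph" where
  "add_isolated G k = (Inl ` verts G \<union> Inr ` {..<k}, (\<lambda>e. Inl ` e) ` edges G)"

definition graph_iso :: "'a graph \<Rightarrow> 'b graph \<Rightarrow> bool" where
  "graph_iso G H \<longleftrightarrow> (\<exists>f. bij_betw f (verts G) (verts H) \<and>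
     (\<forall>u\<in>verts G. \<forall>v\<in>verts G. adj G u v \<longleftrightarrow> adj H (f u) (f v)))"

end

theory Submission
  imports Defs
begin

lemma adj_sym: "adj G u v = adj G v u"
  by (simp add: adj_def insert_commute)
lemma myc_edges: "edges (mycielskian t G) = {{Some (u, 0), Some (v, 0)} | u v. adj G u v}
      \<union> {{Some (u, s), Some (v, Suc s)} | u v s. adj G u v \<and> s < t}
      \<union> {{Some (v, t), None} | v. v \<in> verts G}" by (simp add: edges_def mycielskian_def)

lemma myc_adj_SS: "adj (mycielskian t G) (Some (a,s)) (Some (b,s')) \<longleftrightarrow>
   adj G a b \<and> ((s = 0 \<and> s' = 0) \<or> (s' = Suc s \<and> s < t) \<or> (s = Suc s' \<and> s' < t))"
proof -
  have 1: "{Some (a,s), Some (b,s')} \<in> {{Some (u, 0), Some (v, 0)} | u v. adj G u v} \<longleftrightarrow> adj G a b \<and> s=0 \<and> s'=0"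
    by (auto simp: doubleton_eq_iff) (metis adj_sym)+
  have 2: "{Some (a,s), Some (b,s')} \<in> {{Some (u, s), Some (v, Suc s)} | u v s. adj G u v \<and> s < t} \<longleftrightarrow> adj G a b \<and> ((s' = Suc s \<and> s < t) \<or> (s = Suc s' \<and> s' < t))"
    by (auto simp: doubleton_eq_iff) (metis adj_sym)+
  have 3: "({Some (a,s), Some (b,s')} \<in> {{Some (v, t), None} | v. v \<in> verts G}) = False"
    by (auto simp: doubleton_eq_iff)
  have e: "edges (mycielskian t G) = {{Some (u, 0), Some (v, 0)} | u v. adj G u v}
      \<union> {{Some (u, s), Some (v, Suc s)} | u v s. adj G u v \<and> s < t}
      \<union> {{Some (v, t), None} | v. v \<in> verts G}" by (simp add: edges_def mycielskian_def)
  show ?thesis unfolding adj_def[of "mycielskian t G"] e Un_iff 1 2 3 by auto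
qed
lemma simple_adjD: "simple_graph G \<Longrightarrow> adj G u v \<Longrightarrow> u \<in> verts G \<and> v \<in> verts G \<and> u \<noteq> v"
  unfolding simple_graph_def adj_def edges_def verts_def
  by (fastforce simp: doubleton_eq_iff)

lemma myc_verts: "verts (mycielskian t G) = {Some (v, s) | v s. v \<in> verts G \<and> s \<le> t} \<union> {None}"
  by (simp add: mycielskian_def verts_def)

lemma myc_adj_SN: "adj (mycielskian t G) (Some (a,s)) None \<longleftrightarrow> a \<in> verts G \<and> s = t"
  unfolding adj_def[of "mycielskian t G"] myc_edges
  by (auto simp: doubleton_eq_iff)

lemma myc_adj_NS: "adj (mycielskian t G) None (Some (a,s)) \<longleftrightarrow> a \<in> verts G \<and> s = t"
  using myc_adj_SN adj_sym by metis

lemma myc_adj_NN: "\<not> adj (mycielskian t G) None None"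
  unfolding adj_def[of "mycielskian t G"] myc_edges
  by (auto simp: doubleton_eq_iff)

lemma addiso_verts: "verts (add_isolated H k) = Inl ` verts H \<union> Inr ` {..<k}"
  by (simp add: add_isolated_def verts_def)

lemma addiso_edges: "edges (add_isolated H k) = (\<lambda>e. Inl ` e) ` edges H"
  by (simp add: add_isolated_def edges_def)

lemma tq_edges: "edges (twin_quotient H) = {{X, Z} | X Z. X \<in> twin_class H ` verts H \<and> Z \<in> twin_class H ` verts H \<and>
                    (\<exists>p\<in>X. \<exists>q\<in>Z. adj H p q)}"
  by (simp add: twin_quotient_def edges_def)

lemma addiso_adj_LL: "adj (add_isolated H k) (Inl a) (Inl b) \<longleftrightarrow> adj H a b"
proof
  assume "adj (add_isolated H k) (Inl a) (Inl b)"
  hence "{Inl a, Inl b} \<in> ((\<lambda>e. Inl ` e) ` edges H :: ('a + nat) set set)" by (simp only: adj_def addiso_edges)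
  then obtain e where e: "e \<in> edges H" "{Inl a, Inl b} = Inl ` e"
    by blast
  have "e = {a,b}" using e(2) by (metis image_empty image_insert inj_Inl inj_image_eq_iff)
  thus "adj H a b" using e by (simp add: adj_def)
next
  assume "adj H a b"
  thus "adj (add_isolated H k) (Inl a) (Inl b)"
    by (auto simp: adj_def add_isolated_def edges_def image_iff intro!: bexI[of _ "{a,b}"])
qed

lemma addiso_adj_R1: "\<not> adj (add_isolated H k) (Inr n) x"
  by (auto simp: adj_def add_isolated_def edges_def)

lemma addiso_adj_R2: "\<not> adj (add_isolated H k) x (Inr n)"
  by (auto simp: adj_def add_isolated_def edges_def)

lemma tc_self: "a \<in> verts H \<Longrightarrow> a \<in> twin_class H a"
  by (simp add: twin_class_def twins_def)

lemma tc_eq: "a \<in> verts H \<Longrightarrow> b \<in> verts H \<Longrightarrow> twin_class H a = twin_class H b \<longleftrightarrow> nbhd H a = nbhd H b"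
  unfolding twin_class_def twins_def by auto

lemma tq_verts: "verts (twin_quotient H) = twin_class H ` verts H"
  by (simp add: twin_quotient_def verts_def)

lemma tq_adj:
  assumes ev: "\<And>u v. adj H u v \<Longrightarrow> u \<in> verts H \<and> v \<in> verts H"
    and a: "a \<in> verts H" and b: "b \<in> verts H"
  shows "adj (twin_quotient H) (twin_class H a) (twin_class H b) \<longleftrightarrow> adj H a b"
proof
  assume "adj H a b"
  thus "adj (twin_quotient H) (twin_class H a) (twin_class H b)"
  proof -
    have "{twin_class H a, twin_class H b} \<in> snd (twin_quotient H)"
      unfolding twin_quotient_def snd_conv
      using a b tc_self[OF a] tc_self[OF b] \<open>adj H a b\<close> by blast
    thus ?thesis by (simp add: adj_def edges_def)
  qed
next
  have key: "adj H a b" if p: "p \<in> twin_class H a" and q: "q \<in> twin_class H b" and pq: "adj H p q" for p q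
  proof -
    have "nbhd H a = nbhd H p" "nbhd H b = nbhd H q" using p q by (auto simp: twin_class_def twins_def)
    have "q \<in> nbhd H p" using pq ev by (auto simp: nbhd_def)
    hence "adj H a q" using \<open>nbhd H a = nbhd H p\<close> by (auto simp: nbhd_def)
    hence "a \<in> nbhd H q" using a by (auto simp: nbhd_def adj_sym)
    hence "adj H b a" using \<open>nbhd H b = nbhd H q\<close> by (auto simp: nbhd_def)
    thus ?thesis by (simp add: adj_sym)
  qed
  assume "adj (twin_quotient H) (twin_class H a) (twin_class H b)"
  then obtain X Z p q where "{twin_class H a, twin_class H b} = {X, Z}" "p \<in> X" "q \<in> Z" "adj H p q"
    unfolding adj_def[of "twin_quotient H"] tq_edges by blast
  thus "adj H a b"
    using key[of p q] key[of q p] adj_sym[of H p q] by (auto simp: doubleton_eq_iff)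
qed



lemma myc_adj_in:
  assumes "simple_graph G" "adj (mycielskian t G) u v"
  shows "u \<in> verts (mycielskian t G) \<and> v \<in> verts (mycielskian t G)"
proof (cases u; cases v)
  fix x y assume u: "u = Some x" and v: "v = Some y"
  obtain a s where x: "x = (a,s)" by fastforce
  obtain b s' where y: "y = (b,s')" by fastforce
  show ?thesis using assms simple_adjD[OF assms(1)] unfolding u v x y myc_adj_SS myc_verts by auto
next
  fix x assume u: "u = Some x" and v: "v = None"
  obtain a s where x: "x = (a,s)" by fastforce
  show ?thesis using assms unfolding u v x myc_adj_SN myc_verts by auto
next
  fix y assume u: "u = None" and v: "v = Some y"
  obtain b s' where y: "y = (b,s')" by fastforce
  show ?thesis using assms unfolding u v y myc_adj_NS myc_verts by auto
next
  assume "u = None" "v = None" thus ?thesis using assms myc_adj_NN[of t G] by simp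
qed

lemma myc_nbhd_same:
  assumes "simple_graph G" "a \<in> verts G" "b \<in> verts G" "nbhd G a = nbhd G b"
  shows "nbhd (mycielskian t G) (Some (a,s)) = nbhd (mycielskian t G) (Some (b,s))"
proof -
  have "adj (mycielskian t G) (Some (a,s)) y = adj (mycielskian t G) (Some (b,s)) y"
    if y: "y \<in> verts (mycielskian t G)" for y
  proof (cases y)
    case None thus ?thesis using assms by (simp add: myc_adj_SN)
  next
    case (Some z)
    then obtain c s' where z: "y = Some (c,s')" by fastforce
    hence c: "c \<in> verts G" using y by (auto simp: myc_verts)
    have "adj G a c = adj G b c" using assms(4) c by (auto simp: nbhd_def set_eq_iff)
    thus ?thesis unfolding z myc_adj_SS by simp
  qed
  thus ?thesis by (auto simp: nbhd_def)
qed

lemma myc_nbhd_iso: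
  assumes "simple_graph G" "nbhd G a = {}" "s < t"
  shows "nbhd (mycielskian t G) (Some (a,s)) = {}"
proof -
  have "\<not> adj (mycielskian t G) (Some (a,s)) y" for y
  proof (cases y)
    case None thus ?thesis using assms by (simp add: myc_adj_SN)
  next
    case (Some z)
    then obtain c s' where z: "y = Some (c,s')" by fastforce
    have "\<not> adj G a c" using assms(2) simple_adjD[OF assms(1)] by (auto simp: nbhd_def)
    thus ?thesis unfolding z myc_adj_SS by simp
  qed
  thus ?thesis by (auto simp: nbhd_def)
qed

lemma cond_arith:
  fixes s s' t :: nat
  assumes "t \<ge> 1" "s \<le> t" "s' \<le> t" "s = t \<longleftrightarrow> s' = t"
    "\<forall>x\<le>t. ((s = 0 \<and> x = 0) \<or> (x = Suc s \<and> s < t) \<or> (s = Suc x \<and> x < t)) \<longleftrightarrow>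
           ((s' = 0 \<and> x = 0) \<or> (x = Suc s' \<and> s' < t) \<or> (s' = Suc x \<and> x < t))"
  shows "s = s'"
  using assms by presburger

lemma myc_level:
  assumes G: "simple_graph G" and t: "t \<ge> 1" and a: "a \<in> verts G" and b: "b \<in> verts G"
    and s: "s \<le> t" and s': "s' \<le> t"
    and eq: "nbhd (mycielskian t G) (Some (a,s)) = nbhd (mycielskian t G) (Some (b,s'))"
    and ne: "nbhd G a \<noteq> {}"
  shows "s = s' \<and> nbhd G a \<subseteq> nbhd G b"
proof -
  let ?M = "mycielskian t G"
  let ?C = "\<lambda>s x. (s = 0 \<and> x = 0) \<or> (x = Suc s \<and> s < t) \<or> (s = Suc x \<and> x < t)"
  have mem: "Some (c,x) \<in> nbhd ?M (Some (d,r)) \<longleftrightarrow> adj G d c \<and> ?C r x"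
    if "c \<in> verts G" "x \<le> t" for c x d r
    using that by (auto simp: nbhd_def myc_verts myc_adj_SS)
  have "None \<in> nbhd ?M (Some (a,s)) \<longleftrightarrow> s = t" using a by (simp add: nbhd_def myc_verts myc_adj_SN)
  moreover have "None \<in> nbhd ?M (Some (b,s')) \<longleftrightarrow> s' = t" using b by (simp add: nbhd_def myc_verts myc_adj_SN)
  ultimately have st: "s = t \<longleftrightarrow> s' = t" using eq by simp
  obtain x0 where x0: "x0 \<le> t" "?C s x0"
  proof (cases "s < t")
    case True thus ?thesis using that[of "Suc s"] by simp
  next
    case False thus ?thesis using that[of "s - 1"] s t by auto
  qed
  have sub: "adj G b c \<and> ?C s' x0" if c: "c \<in> nbhd G a" for c
  proof -
    have cv: "c \<in> verts G" "adj G a c" using c by (auto simp: nbhd_def)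
    hence "Some (c,x0) \<in> nbhd ?M (Some (a,s))" using mem x0 by blast
    hence "Some (c,x0) \<in> nbhd ?M (Some (b,s'))" using eq by simp
    thus ?thesis using mem cv x0 by blast
  qed
  obtain c where c: "c \<in> nbhd G a" using ne by blast
  have cv: "c \<in> verts G" "adj G a c" "adj G b c" using c sub by (auto simp: nbhd_def)
  have "\<forall>x\<le>t. ?C s x \<longleftrightarrow> ?C s' x"
  proof (intro allI impI)
    fix x assume "x \<le> t"
    hence "Some (c,x) \<in> nbhd ?M (Some (a,s)) \<longleftrightarrow> ?C s x"
      "Some (c,x) \<in> nbhd ?M (Some (b,s')) \<longleftrightarrow> ?C s' x" using mem cv by auto
    thus "?C s x \<longleftrightarrow> ?C s' x" using eq by simp
  qed
  hence "s = s'" using cond_arith[OF t s s' st] by blast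
  moreover have "nbhd G a \<subseteq> nbhd G b" using sub b by (auto simp: nbhd_def)
  ultimately show ?thesis by simp
qed

lemma myc_None:
  assumes G: "simple_graph G" and x: "isolated G x" and b: "b \<in> verts G"
  shows "nbhd (mycielskian t G) None \<noteq> nbhd (mycielskian t G) (Some (b,s))"
proof -
  have xv: "x \<in> verts G" "nbhd G x = {}" using x by (auto simp: isolated_def)
  have "Some (x,t) \<in> nbhd (mycielskian t G) None" using xv by (auto simp: nbhd_def myc_verts myc_adj_NS)
  moreover have "\<not> adj G b x" using xv G simple_adjD[OF G] by (auto simp: nbhd_def adj_sym)
  hence "Some (x,t) \<notin> nbhd (mycielskian t G) (Some (b,s))" by (auto simp: nbhd_def myc_adj_SS)
  ultimately show ?thesis by blast
qed



theorem mainTheorem5: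
  fixes G :: "'a graph" and t :: nat
  assumes "simple_graph G"
    and "\<exists>x. isolated G x"
    and "\<exists>x y. x \<noteq> y \<and> twins G x y"
    and "t \<ge> 1"
  shows "graph_iso (mycielskian t (twin_quotient G))
                   (add_isolated (twin_quotient (mycielskian t G)) (t - 1))"
proof -
  note G = assms(1) and t = assms(4)
  obtain x0 where x0: "isolated G x0" using assms(2) by blast
  define V where "V = verts G"
  define cls where "cls = twin_class G"
  define Q where "Q = twin_quotient G"
  define M where "M = mycielskian t G"
  define clsM where "clsM = twin_class M"
  define rep where "rep = (\<lambda>X::'a set. SOME v. v \<in> X)"
  define X0 where "X0 = cls x0"
  define r where "r = (\<lambda>u::('a set \<times> nat) option. case u of None \<Rightarrow> None | Some (X,s) \<Rightarrow> Some (rep X, s))"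
  define low where "low = (\<lambda>u::('a set \<times> nat) option. case u of None \<Rightarrow> False | Some (X,s) \<Rightarrow> X = X0 \<and> 0 < s \<and> s < t)"
  define lev where "lev = (\<lambda>u::('a set \<times> nat) option. case u of None \<Rightarrow> 0 | Some (X,s) \<Rightarrow> s)"
  define f where "f = (\<lambda>u. if low u then Inr (lev u - 1) else Inl (clsM (r u)))"
  have evG: "\<And>u v. adj G u v \<Longrightarrow> u \<in> V \<and> v \<in> V" using simple_adjD[OF G] V_def by blast
  have evM: "\<And>u v. adj M u v \<Longrightarrow> u \<in> verts M \<and> v \<in> verts M" using myc_adj_in[OF G] M_def by blast
  have x0V: "x0 \<in> V" "nbhd G x0 = {}" using x0 by (auto simp: isolated_def V_def)
  have rep: "rep X \<in> V \<and> cls (rep X) = X" if XV: "X \<in> cls ` V" for X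
  proof -
    obtain v where v: "v \<in> V" "X = cls v" using XV by blast
    have "v \<in> X" using v tc_self by (simp add: V_def cls_def)
    hence "rep X \<in> X" unfolding rep_def by (rule someI)
    hence tw: "twins G v (rep X)" using v by (simp add: cls_def twin_class_def)
    hence "rep X \<in> V" by (simp add: twins_def V_def)
    moreover have "cls (rep X) = cls v" using tw v tc_eq[of "rep X" G v] \<open>rep X \<in> V\<close>
      by (simp add: twins_def V_def cls_def)
    ultimately show ?thesis using v by simp
  qed
  have iso_iff: "cls a = X0 \<longleftrightarrow> nbhd G a = {}" if "a \<in> V" for a
    using tc_eq[of a G x0] that x0V by (simp add: X0_def cls_def V_def)
  have QV: "verts Q = cls ` V" by (simp add: Q_def tq_verts cls_def V_def)
  have muQV: "verts (mycielskian t Q) = {Some (X, s) | X s. X \<in> cls ` V \<and> s \<le> t} \<union> {None}"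
    using QV by (simp add: myc_verts)
  have MV: "verts M = {Some (v, s) | v s. v \<in> V \<and> s \<le> t} \<union> {None}"
    by (simp add: M_def myc_verts V_def)
  have adjQ: "adj Q (cls a) (cls b) \<longleftrightarrow> adj G a b" if "a \<in> V" "b \<in> V" for a b
    using tq_adj[of G a b] evG that by (simp add: Q_def cls_def V_def)
  have r_in: "r u \<in> verts M" if "u \<in> verts (mycielskian t Q)" for u
  proof (cases u)
    case None thus ?thesis by (simp add: r_def MV)
  next
    case (Some z)
    then obtain X s where X: "u = Some (X,s)" by (cases z) auto
    hence "X \<in> cls ` V" "s \<le> t" using that by (auto simp: muQV)
    thus ?thesis using X rep[of X] by (simp add: r_def MV)
  qed
  have adjr: "adj (mycielskian t Q) u v \<longleftrightarrow> adj M (r u) (r v)"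
    if u: "u \<in> verts (mycielskian t Q)" and v: "v \<in> verts (mycielskian t Q)" for u v
  proof -
    have sv: "\<exists>X s. w = Some (X,s) \<and> X \<in> cls ` V \<and> s \<le> t" if "w \<in> verts (mycielskian t Q)" "w \<noteq> None" for w
      using that unfolding muQV by blast
    show ?thesis
    proof (cases "u = None")
      case un: True
      show ?thesis
      proof (cases "v = None")
        case True thus ?thesis using un myc_adj_NN[of t Q] myc_adj_NN[of t G] by (simp add: r_def M_def)
      next
        case False
        then obtain Z s' where Z: "v = Some (Z,s')" "Z \<in> cls ` V" "s' \<le> t" using sv[OF v False] by blast
        show ?thesis using un Z rep[OF Z(2)] QV by (simp add: r_def M_def myc_adj_NS V_def)
      qed
    next
      case False
      then obtain X s where X: "u = Some (X,s)" "X \<in> cls ` V" "s \<le> t" using sv[OF u False] by blast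
      show ?thesis
      proof (cases "v = None")
        case True thus ?thesis using X rep[OF X(2)] QV by (simp add: r_def M_def myc_adj_SN V_def)
      next
        case False
        then obtain Z s' where Z: "v = Some (Z,s')" "Z \<in> cls ` V" "s' \<le> t" using sv[OF v False] by blast
        have "adj Q X Z \<longleftrightarrow> adj G (rep X) (rep Z)"
          using adjQ[of "rep X" "rep Z"] rep[OF X(2)] rep[OF Z(2)] by simp
        thus ?thesis using X Z by (simp add: r_def M_def myc_adj_SS)
      qed
    qed
  qed
  have lowno: "\<not> adj M (r u) y" if u: "u \<in> verts (mycielskian t Q)" and lu: "low u" for u y
  proof -
    obtain s where s: "u = Some (X0, s)" "0 < s" "s < t"
      using lu by (auto simp: low_def split: option.splits)
    have X0V: "X0 \<in> cls ` V" using x0V by (simp add: X0_def)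
    have "nbhd G (rep X0) = {}" using rep[OF X0V] iso_iff by blast
    hence "nbhd M (Some (rep X0, s)) = {}" using myc_nbhd_iso[OF G] s by (simp add: M_def)
    moreover have "y \<in> verts M" if "adj M (Some (rep X0, s)) y" using evM that by blast
    ultimately show ?thesis using s by (auto simp: r_def nbhd_def)
  qed
  define T where "T = add_isolated (twin_quotient M) (t - 1)"
  have TV: "verts T = Inl ` (clsM ` verts M) \<union> Inr ` {..<t-1}"
    by (simp add: T_def addiso_verts tq_verts clsM_def)
  have adjT: "adj (mycielskian t Q) u v \<longleftrightarrow> adj T (f u) (f v)"
    if u: "u \<in> verts (mycielskian t Q)" and v: "v \<in> verts (mycielskian t Q)" for u v
  proof (cases "low u")
    case True
    thus ?thesis using lowno[OF u True] adjr[OF u v] by (simp add: f_def T_def addiso_adj_R1)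
  next
    case nu: False
    show ?thesis
    proof (cases "low v")
      case True
      thus ?thesis using lowno[OF v True] adjr[OF u v] adj_sym[of M] by (simp add: f_def T_def addiso_adj_R2)
    next
      case False
      have "adj (twin_quotient M) (clsM (r u)) (clsM (r v)) \<longleftrightarrow> adj M (r u) (r v)"
        using tq_adj[of M, OF evM r_in[OF u] r_in[OF v]] by (simp add: clsM_def)
      thus ?thesis using nu False adjr[OF u v] by (simp add: f_def T_def addiso_adj_LL)
    qed
  qed
  have sv: "\<exists>X s. w = Some (X,s) \<and> X \<in> cls ` V \<and> s \<le> t" if "w \<in> verts (mycielskian t Q)" "w \<noteq> None" for w
    using that unfolding muQV by blast
  have nbM: "nbhd M (r u) = nbhd M (r v) \<Longrightarrow> u = v"
    if u: "u \<in> verts (mycielskian t Q)" and v: "v \<in> verts (mycielskian t Q)"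
      and nu: "\<not> low u" and nv: "\<not> low v" for u v
  proof (cases "u = None")
    case un: True
    show "nbhd M (r u) = nbhd M (r v) \<Longrightarrow> u = v"
    proof (cases "v = None")
      case True thus ?thesis using un by simp
    next
      case False
      then obtain Z s' where Z: "v = Some (Z,s')" "Z \<in> cls ` V" "s' \<le> t" using sv[OF v False] by blast
      show "nbhd M (r u) = nbhd M (r v) \<Longrightarrow> u = v"
      proof -
        assume "nbhd M (r u) = nbhd M (r v)"
        hence "nbhd M None = nbhd M (Some (rep Z, s'))" using un Z by (simp add: r_def)
        thus "u = v" using myc_None[OF G x0, of "rep Z" t s'] rep[OF Z(2)] by (simp add: M_def V_def)
      qed
    qed
  next
    case False
    then obtain X s where X: "u = Some (X,s)" "X \<in> cls ` V" "s \<le> t" using sv[OF u False] by blast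
    show "nbhd M (r u) = nbhd M (r v) \<Longrightarrow> u = v"
    proof (cases "v = None")
      case True show "nbhd M (r u) = nbhd M (r v) \<Longrightarrow> u = v"
      proof -
        assume "nbhd M (r u) = nbhd M (r v)"
        hence "nbhd M None = nbhd M (Some (rep X, s))" using True X by (simp add: r_def)
        thus "u = v" using myc_None[OF G x0, of "rep X" t s] rep[OF X(2)] by (simp add: M_def V_def)
      qed
    next
      case False
      then obtain Z s' where Z: "v = Some (Z,s')" "Z \<in> cls ` V" "s' \<le> t" using sv[OF v False] by blast
      assume eq0: "nbhd M (r u) = nbhd M (r v)"
      define a where "a = rep X"
      define b where "b = rep Z"
      have a: "a \<in> V" "cls a = X" using rep[OF X(2)] a_def by auto
      have b: "b \<in> V" "cls b = Z" using rep[OF Z(2)] b_def by auto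
      have eq: "nbhd M (Some (a,s)) = nbhd M (Some (b,s'))" using eq0 X Z by (simp add: r_def a_def b_def)
      show "u = v"
      proof (cases "nbhd G a = {} \<and> nbhd G b = {}")
        case False
        hence "nbhd G a \<noteq> {} \<or> nbhd G b \<noteq> {}" by blast
        hence "s = s' \<and> nbhd G a = nbhd G b"
        proof
          assume ne: "nbhd G a \<noteq> {}"
          have 1: "s = s' \<and> nbhd G a \<subseteq> nbhd G b"
            using myc_level[OF G t _ _ X(3) Z(3), of a b] a b eq ne by (simp add: M_def V_def)
          hence "nbhd G b \<noteq> {}" using ne by blast
          hence "nbhd G b \<subseteq> nbhd G a"
            using myc_level[OF G t _ _ Z(3) X(3), of b a] a b eq by (simp add: M_def V_def)
          thus ?thesis using 1 by blast
        next
          assume ne: "nbhd G b \<noteq> {}"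
          have 1: "s' = s \<and> nbhd G b \<subseteq> nbhd G a"
            using myc_level[OF G t _ _ Z(3) X(3), of b a] a b eq ne by (simp add: M_def V_def)
          hence "nbhd G a \<noteq> {}" using ne by blast
          hence "nbhd G a \<subseteq> nbhd G b"
            using myc_level[OF G t _ _ X(3) Z(3), of a b] a b eq by (simp add: M_def V_def)
          thus ?thesis using 1 by blast
        qed
        hence "cls a = cls b" using tc_eq[of a G b] a b by (simp add: cls_def V_def)
        thus ?thesis using X Z a b \<open>s = s' \<and> _\<close> by simp
      next
        case True
        hence XZ: "X = X0" "Z = X0" using iso_iff a b by auto
        have "s = 0 \<or> s = t" "s' = 0 \<or> s' = t" using nu nv X Z XZ by (auto simp: low_def)
        have "None \<in> nbhd M (Some (a,s)) \<longleftrightarrow> s = t" using a by (simp add: nbhd_def M_def myc_verts myc_adj_SN V_def)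
        moreover have "None \<in> nbhd M (Some (b,s')) \<longleftrightarrow> s' = t" using b by (simp add: nbhd_def M_def myc_verts myc_adj_SN V_def)
        ultimately have "s = t \<longleftrightarrow> s' = t" using eq by simp
        hence "s = s'" using \<open>s = 0 \<or> s = t\<close> \<open>s' = 0 \<or> s' = t\<close> t by auto
        thus ?thesis using X Z XZ by simp
      qed
    qed
  qed
  have inj: "inj_on f (verts (mycielskian t Q))"
  proof (rule inj_onI)
    fix u v assume u: "u \<in> verts (mycielskian t Q)" and v: "v \<in> verts (mycielskian t Q)" and fe: "f u = f v"
    show "u = v"
    proof (cases "low u")
      case True
      hence lv: "low v" using fe by (auto simp: f_def split: if_splits)
      obtain s where s: "u = Some (X0, s)" "0 < s" "s < t"
        using True by (auto simp: low_def split: option.splits)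
      obtain s' where s': "v = Some (X0, s')" "0 < s'" "s' < t"
        using lv by (auto simp: low_def split: option.splits)
      show ?thesis using fe s s' True lv by (simp add: f_def lev_def)
    next
      case False
      hence lv: "\<not> low v" using fe by (auto simp: f_def split: if_splits)
      have "clsM (r u) = clsM (r v)" using fe False lv by (simp add: f_def)
      hence "nbhd M (r u) = nbhd M (r v)" using tc_eq[OF r_in[OF u] r_in[OF v]] by (simp add: clsM_def)
      thus ?thesis using nbM[OF u v False lv] by blast
    qed
  qed
  have img: "f ` verts (mycielskian t Q) = verts T"
  proof
    show "f ` verts (mycielskian t Q) \<subseteq> verts T"
    proof
      fix y assume "y \<in> f ` verts (mycielskian t Q)"
      then obtain u where u: "u \<in> verts (mycielskian t Q)" "y = f u" by blast
      show "y \<in> verts T"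
      proof (cases "low u")
        case True
        obtain s where s: "u = Some (X0, s)" "0 < s" "s < t"
          using True by (auto simp: low_def split: option.splits)
        thus ?thesis using u True by (simp add: TV f_def lev_def)
      next
        case False thus ?thesis using u r_in[OF u(1)] by (simp add: TV f_def)
      qed
    qed
  next
    have X0V: "X0 \<in> cls ` V" using x0V by (simp add: X0_def)
    have rX0: "rep X0 \<in> V" "nbhd G (rep X0) = {}" using rep[OF X0V] iso_iff by auto
    show "verts T \<subseteq> f ` verts (mycielskian t Q)"
    proof
      fix y assume "y \<in> verts T"
      then consider k where "y = Inr k" "k < t - 1" | m where "y = Inl (clsM m)" "m \<in> verts M"
        unfolding TV by blast
      thus "y \<in> f ` verts (mycielskian t Q)"
      proof cases
        case 1
        have "Some (X0, Suc k) \<in> verts (mycielskian t Q)" using 1 X0V by (simp add: muQV)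
        moreover have "f (Some (X0, Suc k)) = y" using 1 by (simp add: f_def low_def lev_def)
        ultimately show ?thesis by (metis image_eqI)
      next
        case 2
        show ?thesis
        proof (cases "m = None")
          case True
          have "None \<in> verts (mycielskian t Q)" by (simp add: muQV)
          moreover have "f None = y" using 2 True by (simp add: f_def low_def r_def)
          ultimately show ?thesis by (metis image_eqI)
        next
          case False
          then obtain v s where m: "m = Some (v,s)" "v \<in> V" "s \<le> t" using 2 MV by auto
          show ?thesis
          proof (cases "nbhd G v \<noteq> {} \<or> s = t")
            case True
            have cv: "cls v \<in> cls ` V" using m by simp
            have nl: "\<not> low (Some (cls v, s))" using True iso_iff[OF m(2)] by (auto simp: low_def)
            have rv: "rep (cls v) \<in> V" "cls (rep (cls v)) = cls v" using rep[OF cv] by auto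
            hence "nbhd G (rep (cls v)) = nbhd G v" using tc_eq[of "rep (cls v)" G v] m by (simp add: cls_def V_def)
            hence "nbhd M (Some (rep (cls v), s)) = nbhd M m"
              using myc_nbhd_same[OF G, of "rep (cls v)" v t s] rv m by (simp add: M_def V_def)
            moreover have "Some (rep (cls v), s) \<in> verts M" "m \<in> verts M" using rv m 2 by (auto simp: MV)
            ultimately have "clsM (Some (rep (cls v), s)) = clsM m" using tc_eq[of "Some (rep (cls v), s)" M m] by (simp add: clsM_def)
            hence "f (Some (cls v, s)) = y" using nl 2 by (simp add: f_def r_def)
            moreover have "Some (cls v, s) \<in> verts (mycielskian t Q)" using cv m by (simp add: muQV)
            ultimately show ?thesis by (metis image_eqI)
          next
            case False
            hence nv: "nbhd G v = {}" "s < t" using m by auto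
            have nl: "\<not> low (Some (X0, 0))" by (simp add: low_def)
            have "nbhd M (Some (rep X0, 0)) = {}" "nbhd M m = {}"
              using myc_nbhd_iso[OF G] rX0 nv t m by (simp_all add: M_def)
            moreover have "Some (rep X0, 0) \<in> verts M" "m \<in> verts M" using rX0 m 2 by (auto simp: MV)
            ultimately have "clsM (Some (rep X0, 0)) = clsM m" using tc_eq[of "Some (rep X0, 0)" M m] by (simp add: clsM_def)
            hence "f (Some (X0, 0)) = y" using nl 2 by (simp add: f_def r_def)
            moreover have "Some (X0, 0) \<in> verts (mycielskian t Q)" using X0V by (simp add: muQV)
            ultimately show ?thesis by (metis image_eqI)
          qed
        qed
      qed
    qed
  qed
  have "bij_betw f (verts (mycielskian t Q)) (verts T) \<and>
     (\<forall>u\<in>verts (mycielskian t Q). \<forall>v\<in>verts (mycielskian t Q). adj (mycielskian t Q) u v \<longleftrightarrow> adj T (f u) (f v))"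
    using inj img adjT by (simp add: bij_betw_def)
  hence "graph_iso (mycielskian t Q) T" unfolding graph_iso_def by blast
  thus ?thesis by (simp add: T_def Q_def M_def)
qed

end
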